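(* Let $q(x)$ be a multilinear polynomial over $\mathbb{R}^n$ of degree at most $d$ with $\mathrm{sparsity}(q)=T$. Then for $\mathbf{x}$ uniformly distributed on $\{0,1\}^n$, the random variable $q(\mathbf{x})$ takes at least $\frac{1}{2d^2}\log(T)-2$ distinct output values.
   Context: A multilinear polynomial of degree at most $d$ is $q(x)=\sum_{|S|\le d}\widehat{q}(S)\prod_{i\in S}x_i$; $\mathrm{sparsity}(q)$ is its number of nonzero coefficients. $\log$ denotes the logarithm to base $2$. *)

theory Defs
  imports Complex_Main
begin

text \<open>A multilinear polynomial in variables x_0,...,x_{n-1} is given by its Fourier/monomial
coefficients c :: nat set => real, with c S = 0 unless S is a subset of {..<n}.\<close>

definition is_multilinear :: "nat \<Rightarrow> (nat set \<Rightarrow> real) \<Rightarrow> bool" where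
  "is_multilinear n c \<longleftrightarrow> (\<forall>S. c S \<noteq> 0 \<longrightarrow> S \<subseteq> {..<n})"

definition degree_le :: "(nat set \<Rightarrow> real) \<Rightarrow> nat \<Rightarrow> bool" where
  "degree_le c d \<longleftrightarrow> (\<forall>S. c S \<noteq> 0 \<longrightarrow> card S \<le> d)"

definition sparsity :: "(nat set \<Rightarrow> real) \<Rightarrow> nat" where
  "sparsity c = card {S. c S \<noteq> 0}"

definition ml_eval :: "nat \<Rightarrow> (nat set \<Rightarrow> real) \<Rightarrow> (nat \<Rightarrow> real) \<Rightarrow> real" where
  "ml_eval n c x = (\<Sum>S\<in>Pow {..<n}. c S * (\<Prod>i\<in>S. x i))"

definition bool_cube :: "nat \<Rightarrow> (nat \<Rightarrow> real) set" where
  "bool_cube n = {x. (\<forall>i<n. x i \<in> {0,1}) \<and> (\<forall>i\<ge>n. x i = 0)}"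

end

theory Submission
  imports Defs
begin


definition chi :: "'a set \<Rightarrow> 'a set \<Rightarrow> real" where
  "chi S A = (-1) ^ card (S \<inter> A)"

lemma sum_pow_prod:
  assumes "finite M"
  shows "(\<Sum>B\<in>Pow M. \<Prod>i\<in>B. g i) = (\<Prod>i\<in>M. g i + 1::real)"
  using prod_add[OF assms, of g "\<lambda>_. 1"] by simp

lemma chi_prod:
  assumes "finite B"
  shows "chi S B = (\<Prod>i\<in>B. if i \<in> S then -1 else 1)"
proof -
  have "(\<Prod>i\<in>B. if i \<in> S then -1 else (1::real)) = (\<Prod>i\<in>B \<inter> {x. x \<in> S}. -1) * (\<Prod>i\<in>B \<inter> - {x. x\<in>S}. 1)"
    by (rule prod.If_cases[OF assms])
  also have "\<dots> = (-1) ^ card (B \<inter> S)" by simp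
  finally show ?thesis unfolding chi_def by (simp add: Int_commute)
qed

lemma chi_sym: "chi S A = chi A S"
  unfolding chi_def by (simp add: Int_commute)

lemma chi_prod2:
  assumes "finite S"
  shows "chi S A = (\<Prod>i\<in>S. if i \<in> A then -1 else 1)"
  using chi_prod[OF assms, of A] chi_sym by metis

lemma orth:
  assumes "finite M"
  shows "(\<Sum>B\<in>Pow M. chi S B) = (if M \<inter> S = {} then 2 ^ card M else 0)"
proof -
  have "(\<Sum>B\<in>Pow M. chi S B) = (\<Sum>B\<in>Pow M. \<Prod>i\<in>B. if i \<in> S then -1 else 1)"
    by (rule sum.cong) (auto intro!: chi_prod dest: finite_subset[OF _ assms])
  also have "\<dots> = (\<Prod>i\<in>M. (if i \<in> S then -1 else 1) + 1)"
    by (rule sum_pow_prod[OF assms])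
  also have "\<dots> = (if M \<inter> S = {} then 2 ^ card M else 0)"
  proof (cases "M \<inter> S = {}")
    case True
    then have "(\<Prod>i\<in>M. (if i \<in> S then -1 else 1) + 1) = (\<Prod>i\<in>M. (2::real))"
      by (intro prod.cong) auto
    then show ?thesis using True by simp
  next
    case False
    then obtain i where "i \<in> M" "i \<in> S" by auto
    then show ?thesis using False assms by (auto intro!: prod_zero)
  qed
  finally show ?thesis .
qed

lemma chi_chi_sum:
  assumes "finite N" "A \<subseteq> N" "B \<subseteq> N"
  shows "(\<Sum>S\<in>Pow N. chi S A * chi S B) = (if A = B then 2 ^ card N else 0)"
proof -
  have "(\<Sum>S\<in>Pow N. chi S A * chi S B) =
     (\<Sum>S\<in>Pow N. \<Prod>i\<in>S. (if i \<in> A then -1 else 1) * (if i \<in> B then -1 else 1))"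
    by (rule sum.cong) (auto simp: chi_prod2 prod.distrib dest: finite_subset[OF _ assms(1)])
  also have "\<dots> = (\<Prod>i\<in>N. (if i \<in> A then -1 else 1) * (if i \<in> B then -1 else 1) + 1)"
    by (rule sum_pow_prod[OF assms(1)])
  also have "\<dots> = (if A = B then 2 ^ card N else 0)"
  proof (cases "A = B")
    case True
    then have "(\<Prod>i\<in>N. (if i \<in> A then -1 else 1) * (if i \<in> B then -1 else 1) + 1) = (\<Prod>i\<in>N. (2::real))"
      by (intro prod.cong) auto
    then show ?thesis using True by simp
  next
    case False
    then obtain i where "i \<in> N" "(i \<in> A) \<noteq> (i \<in> B)" using assms by blast
    then show ?thesis using False assms by (auto intro!: prod_zero)
  qed
  finally show ?thesis .
qed

definition fh :: "'a set \<Rightarrow> ('a set \<Rightarrow> real) \<Rightarrow> 'a set \<Rightarrow> real" where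
  "fh N F S = (\<Sum>A\<in>Pow N. F A * chi S A)"

lemma parseval:
  assumes "finite N"
  shows "(\<Sum>S\<in>Pow N. (fh N F S)^2) = 2 ^ card N * (\<Sum>A\<in>Pow N. (F A)^2)"
proof -
  have e1: "(fh N F S)^2 = (\<Sum>A\<in>Pow N. \<Sum>B\<in>Pow N. F A * F B * (chi S A * chi S B))" for S
  proof -
    have "(fh N F S)^2 = (\<Sum>A\<in>Pow N. F A * chi S A) * (\<Sum>B\<in>Pow N. F B * chi S B)"
      unfolding fh_def power2_eq_square ..
    also have "\<dots> = (\<Sum>A\<in>Pow N. \<Sum>B\<in>Pow N. (F A * chi S A) * (F B * chi S B))"
      by (rule sum_product)
    also have "\<dots> = (\<Sum>A\<in>Pow N. \<Sum>B\<in>Pow N. F A * F B * (chi S A * chi S B))"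
      by (intro sum.cong refl) (simp only: mult_ac)
    finally show ?thesis .
  qed
  have "(\<Sum>S\<in>Pow N. (fh N F S)^2) = (\<Sum>S\<in>Pow N. \<Sum>A\<in>Pow N. \<Sum>B\<in>Pow N. F A * F B * (chi S A * chi S B))"
    by (simp only: e1)
  also have "\<dots> = (\<Sum>A\<in>Pow N. \<Sum>S\<in>Pow N. \<Sum>B\<in>Pow N. F A * F B * (chi S A * chi S B))"
    by (rule sum.swap)
  also have "\<dots> = (\<Sum>A\<in>Pow N. \<Sum>B\<in>Pow N. \<Sum>S\<in>Pow N. F A * F B * (chi S A * chi S B))"
    by (intro sum.cong refl sum.swap)
  also have "\<dots> = (\<Sum>A\<in>Pow N. \<Sum>B\<in>Pow N. F A * F B * (if A = B then 2 ^ card N else 0))"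
  proof (intro sum.cong refl)
    fix A B assume "A \<in> Pow N" "B \<in> Pow N"
    then show "(\<Sum>S\<in>Pow N. F A * F B * (chi S A * chi S B)) = F A * F B * (if A = B then 2 ^ card N else 0)"
      using chi_chi_sum[OF assms, of A B] by (simp only: sum_distrib_left[symmetric]) simp
  qed
  also have "\<dots> = (\<Sum>A\<in>Pow N. F A * F A * 2 ^ card N)"
  proof (intro sum.cong refl)
    fix A assume A: "A \<in> Pow N"
    have "(\<Sum>B\<in>Pow N. F A * F B * (if A = B then 2 ^ card N else 0)) = (\<Sum>B\<in>Pow N. if A = B then F A * F B * 2 ^ card N else 0)"
      by (intro sum.cong refl) simp
    also have "\<dots> = F A * F A * 2 ^ card N" using A assms by (simp add: sum.delta)
    finally show "(\<Sum>B\<in>Pow N. F A * F B * (if A = B then 2 ^ card N else 0)) = F A * F A * 2 ^ card N" .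
  qed
  finally show ?thesis by (simp add: sum_distrib_left power2_eq_square algebra_simps)
qed

definition flip :: "'a \<Rightarrow> 'a set \<Rightarrow> 'a set" where
  "flip i A = (if i \<in> A then A - {i} else insert i A)"

lemma flip_flip: "flip i (flip i A) = A"
  unfolding flip_def by auto

lemma flip_Pow: "i \<in> N \<Longrightarrow> A \<in> Pow N \<Longrightarrow> flip i A \<in> Pow N"
  unfolding flip_def by auto

lemma flip_sub: "i \<in> N \<Longrightarrow> A \<subseteq> N \<Longrightarrow> flip i A \<subseteq> N"
  unfolding flip_def by auto

lemma chi_flip:
  assumes "finite S"
  shows "chi S (flip i A) = (if i \<in> S then -1 else 1) * chi S A"
proof -
  have "chi S (flip i A) = (\<Prod>j\<in>S. (if j = i then -1 else 1) * (if j \<in> A then -1 else 1))"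
    unfolding chi_prod2[OF assms] by (intro prod.cong refl) (auto simp: flip_def)
  also have "\<dots> = (\<Prod>j\<in>S. (if j = i then -1 else 1)) * chi S A"
    unfolding chi_prod2[OF assms] prod.distrib ..
  also have "(\<Prod>j\<in>S. (if j = i then -1 else 1::real)) = (if i \<in> S then -1 else 1)"
    using prod.delta[OF assms, of i "\<lambda>_. -1::real"] by simp
  finally show ?thesis .
qed

lemma fh_deriv:
  assumes "finite N" "i \<in> N" "S \<subseteq> N"
  shows "fh N (\<lambda>A. F A - F (flip i A)) S = (if i \<in> S then 2 else 0) * fh N F S"
proof -
  have fS: "finite S" using assms finite_subset by blast
  have "(\<Sum>A\<in>Pow N. F (flip i A) * chi S A) = (\<Sum>A\<in>Pow N. F A * chi S (flip i A))"
    by (rule sum.reindex_bij_witness[of _ "flip i" "flip i"]) (use assms(2) in \<open>auto simp: flip_flip flip_sub\<close>)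
  also have "\<dots> = (if i \<in> S then -1 else 1) * fh N F S"
    unfolding fh_def sum_distrib_left by (intro sum.cong refl) (simp add: chi_flip[OF fS])
  finally have *: "(\<Sum>A\<in>Pow N. F (flip i A) * chi S A) = (if i \<in> S then -1 else 1) * fh N F S" .
  have "fh N (\<lambda>A. F A - F (flip i A)) S = fh N F S - (\<Sum>A\<in>Pow N. F (flip i A) * chi S A)"
    unfolding fh_def by (simp add: left_diff_distrib sum_subtractf)
  then show ?thesis using * by simp
qed

definition hasdeg :: "'a set \<Rightarrow> nat \<Rightarrow> ('a set \<Rightarrow> real) \<Rightarrow> bool" where
  "hasdeg N D F \<longleftrightarrow> (\<exists>a. (\<forall>T. a T \<noteq> 0 \<longrightarrow> T \<subseteq> N \<and> card T \<le> D) \<and>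
      (\<forall>A. A \<subseteq> N \<longrightarrow> F A = (\<Sum>T\<in>Pow A. a T)))"

lemma sum_supsets:
  assumes "finite N" "T \<subseteq> N"
  shows "(\<Sum>A\<in>Pow N. if T \<subseteq> A then chi S A else 0) = chi S T * (\<Sum>B\<in>Pow (N - T). chi S B)"
proof -
  have "(\<Sum>A\<in>Pow N. if T \<subseteq> A then chi S A else 0) = (\<Sum>A\<in>{A\<in>Pow N. T \<subseteq> A}. chi S A)"
    by (simp add: sum.inter_filter[symmetric] assms)
  also have "\<dots> = (\<Sum>B\<in>Pow (N - T). chi S (T \<union> B))"
    by (rule sum.reindex_bij_witness[of _ "\<lambda>A. T \<union> A" "\<lambda>A. A - T"]) (use assms in \<open>auto simp: sup.absorb2\<close>)
  also have "\<dots> = (\<Sum>B\<in>Pow (N - T). chi S T * chi S B)"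
  proof (intro sum.cong refl)
    fix B assume B: "B \<in> Pow (N - T)"
    have fin: "finite T" "finite B" using B assms finite_subset[of B N] finite_subset[of T N] by auto
    have "S \<inter> (T \<union> B) = (S \<inter> T) \<union> (S \<inter> B)" by auto
    moreover have "card ((S \<inter> T) \<union> (S \<inter> B)) = card (S \<inter> T) + card (S \<inter> B)"
      by (rule card_Un_disjoint) (use fin B in auto)
    ultimately show "chi S (T \<union> B) = chi S T * chi S B"
      unfolding chi_def by (simp add: power_add)
  qed
  finally show ?thesis by (simp add: sum_distrib_left)
qed

lemma fh_deg:
  assumes "finite N" "hasdeg N D F" "S \<subseteq> N" "card S > D"
  shows "fh N F S = 0"
proof -
  obtain a where a: "\<And>T. a T \<noteq> 0 \<Longrightarrow> T \<subseteq> N \<and> card T \<le> D"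
    and F: "\<And>A. A \<subseteq> N \<Longrightarrow> F A = (\<Sum>T\<in>Pow A. a T)"
    using assms(2) unfolding hasdeg_def by blast
  have "fh N F S = (\<Sum>A\<in>Pow N. (\<Sum>T\<in>Pow N. if T \<subseteq> A then a T else 0) * chi S A)"
    unfolding fh_def
  proof (intro sum.cong refl)
    fix A assume A: "A \<in> Pow N"
    have "(\<Sum>T\<in>Pow N. if T \<subseteq> A then a T else 0) = (\<Sum>T\<in>{T\<in>Pow N. T \<subseteq> A}. a T)"
      by (simp add: sum.inter_filter[symmetric] assms)
    also have "{T\<in>Pow N. T \<subseteq> A} = Pow A" using A by auto
    finally show "F A * chi S A = (\<Sum>T\<in>Pow N. if T \<subseteq> A then a T else 0) * chi S A"
      using F A by simp
  qed
  also have "\<dots> = (\<Sum>T\<in>Pow N. a T * (\<Sum>A\<in>Pow N. if T \<subseteq> A then chi S A else 0))"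
    unfolding sum_distrib_left sum_distrib_right
    by (subst sum.swap) (intro sum.cong refl, simp)
  also have "\<dots> = 0"
  proof (intro sum.neutral ballI)
    fix T assume T: "T \<in> Pow N"
    show "a T * (\<Sum>A\<in>Pow N. if T \<subseteq> A then chi S A else 0) = 0"
    proof (cases "a T = 0")
      case False
      then have "card T \<le> D" using a by blast
      then have "\<not> S \<subseteq> T" using assms T card_mono[of T S] finite_subset by fastforce
      then have "(N - T) \<inter> S \<noteq> {}" using assms(3) by blast
      then show ?thesis using T assms(1) by (simp add: sum_supsets orth)
    qed simp
  qed
  finally show ?thesis .
qed

lemma influence:
  assumes "finite N" "hasdeg N D F"
  shows "(\<Sum>i\<in>N. \<Sum>A\<in>Pow N. (F A - F (flip i A))^2) \<le> 4 * D * (\<Sum>A\<in>Pow N. (F A)^2)"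
proof -
  define P :: real where "P = 2 ^ card N"
  have P: "P > 0" unfolding P_def by simp
  have "P * (\<Sum>i\<in>N. \<Sum>A\<in>Pow N. (F A - F (flip i A))^2) = (\<Sum>i\<in>N. P * (\<Sum>A\<in>Pow N. (F A - F (flip i A))^2))"
    by (simp add: sum_distrib_left)
  also have "\<dots> = (\<Sum>i\<in>N. \<Sum>S\<in>Pow N. (fh N (\<lambda>A. F A - F (flip i A)) S)^2)"
  proof (intro sum.cong refl)
    fix i assume "i \<in> N"
    show "P * (\<Sum>A\<in>Pow N. (F A - F (flip i A))^2) = (\<Sum>S\<in>Pow N. (fh N (\<lambda>A. F A - F (flip i A)) S)^2)"
      using parseval[OF assms(1), of "\<lambda>A. F A - F (flip i A)"] unfolding P_def by simp
  qed
  also have "\<dots> = (\<Sum>i\<in>N. \<Sum>S\<in>Pow N. (if i \<in> S then 4 else 0) * (fh N F S)^2)"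
    by (intro sum.cong refl) (auto simp: fh_deriv assms power_mult_distrib)
  also have "\<dots> = (\<Sum>S\<in>Pow N. \<Sum>i\<in>N. (if i \<in> S then 4 else 0) * (fh N F S)^2)"
    by (rule sum.swap)
  also have "\<dots> = (\<Sum>S\<in>Pow N. 4 * real (card S) * (fh N F S)^2)"
  proof (intro sum.cong refl)
    fix S assume S: "S \<in> Pow N"
    have "(\<Sum>i\<in>N. (if i \<in> S then 4 else 0) * (fh N F S)^2) = (\<Sum>i\<in>N. if i \<in> S then 4 * (fh N F S)^2 else 0)"
      by (intro sum.cong refl) simp
    also have "\<dots> = (\<Sum>i\<in>N \<inter> S. 4 * (fh N F S)^2)"
      by (simp add: sum.inter_filter[symmetric] assms Int_def)
    also have "N \<inter> S = S" using S by auto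
    finally show "(\<Sum>i\<in>N. (if i \<in> S then 4 else 0) * (fh N F S)^2) = 4 * real (card S) * (fh N F S)^2"
      by simp
  qed
  also have "\<dots> \<le> (\<Sum>S\<in>Pow N. 4 * real D * (fh N F S)^2)"
  proof (intro sum_mono)
    fix S assume S: "S \<in> Pow N"
    show "4 * real (card S) * (fh N F S)^2 \<le> 4 * real D * (fh N F S)^2"
    proof (cases "card S \<le> D")
      case False
      then show ?thesis using fh_deg[OF assms(1,2), of S] S by simp
    qed (simp add: mult_right_mono)
  qed
  also have "\<dots> = P * (4 * D * (\<Sum>A\<in>Pow N. (F A)^2))"
    unfolding sum_distrib_left[symmetric] by (simp add: parseval assms P_def)
  finally show ?thesis using P by simp
qed



lemma sum_pow_insert:
  assumes "finite A" "j \<notin> A"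
  shows "(\<Sum>T\<in>Pow (insert j A). f T) = (\<Sum>T\<in>Pow A. f T) + (\<Sum>T\<in>Pow A. f (insert j T))"
proof -
  have "(\<Sum>T\<in>Pow (insert j A). f T) = (\<Sum>T\<in>Pow A. f T) + (\<Sum>T\<in>insert j ` Pow A. f T)"
    unfolding Pow_insert by (rule sum.union_disjoint) (use assms in auto)
  also have "(\<Sum>T\<in>insert j ` Pow A. f T) = (\<Sum>T\<in>Pow A. f (insert j T))"
    by (rule sum.reindex_cong[of "insert j"]) (use assms in \<open>auto simp: inj_on_def\<close>)
  finally show ?thesis .
qed

lemma hasdeg_const:
  assumes "finite N"
  shows "hasdeg N D (\<lambda>_. r)"
proof -
  have s: "\<forall>T. (if T = {} then r else 0) \<noteq> 0 \<longrightarrow> T \<subseteq> N \<and> card T \<le> D" by auto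
  have e: "\<forall>A. A \<subseteq> N \<longrightarrow> r = (\<Sum>T\<in>Pow A. if T = {} then r else 0)"
  proof (intro allI impI)
    fix A assume "A \<subseteq> N"
    then have "finite A" using assms finite_subset by blast
    then show "r = (\<Sum>T\<in>Pow A. if T = {} then r else 0)"
      by (simp add: sum.delta')
  qed
  show ?thesis unfolding hasdeg_def by (rule exI[of _ "\<lambda>T. if T = {} then r else 0"]) (use s e in simp)
qed

lemma hasdeg_lin:
  assumes "finite N" "hasdeg N D F"
  shows "hasdeg N D (\<lambda>A. r * F A + s)"
proof -
  obtain a where a: "\<And>T. a T \<noteq> 0 \<Longrightarrow> T \<subseteq> N \<and> card T \<le> D"
    and F: "\<And>A. A \<subseteq> N \<Longrightarrow> F A = (\<Sum>T\<in>Pow A. a T)"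
    using assms(2) unfolding hasdeg_def by blast
  have s: "\<forall>T. r * a T + (if T = {} then s else 0) \<noteq> 0 \<longrightarrow> T \<subseteq> N \<and> card T \<le> D"
  proof (intro allI impI)
    fix T assume "r * a T + (if T = {} then s else 0) \<noteq> 0"
    then show "T \<subseteq> N \<and> card T \<le> D" using a by (cases "T = {}") auto
  qed
  have e: "\<forall>A. A \<subseteq> N \<longrightarrow> r * F A + s = (\<Sum>T\<in>Pow A. r * a T + (if T = {} then s else 0))"
  proof (intro allI impI)
    fix A assume A: "A \<subseteq> N"
    then have "finite A" using assms finite_subset by blast
    then show "r * F A + s = (\<Sum>T\<in>Pow A. r * a T + (if T = {} then s else 0))"
      using F[OF A] by (simp add: sum.distrib sum_distrib_left sum.delta')
  qed
  show ?thesis unfolding hasdeg_def by (rule exI[of _ "\<lambda>T. r * a T + (if T = {} then s else 0)"]) (use s e in simp)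
qed

lemma hasdeg_mult:
  assumes "finite N" "hasdeg N D1 F" "hasdeg N D2 G"
  shows "hasdeg N (D1 + D2) (\<lambda>A. F A * G A)"
proof -
  obtain a where a: "\<And>T. a T \<noteq> 0 \<Longrightarrow> T \<subseteq> N \<and> card T \<le> D1"
    and F: "\<And>A. A \<subseteq> N \<Longrightarrow> F A = (\<Sum>T\<in>Pow A. a T)"
    using assms(2) unfolding hasdeg_def by blast
  obtain b where b: "\<And>T. b T \<noteq> 0 \<Longrightarrow> T \<subseteq> N \<and> card T \<le> D2"
    and G: "\<And>A. A \<subseteq> N \<Longrightarrow> G A = (\<Sum>T\<in>Pow A. b T)"
    using assms(3) unfolding hasdeg_def by blast
  define e where "e U = (\<Sum>S\<in>Pow U. \<Sum>T\<in>Pow U. if S \<union> T = U then a S * b T else 0)" for U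
  have s: "\<forall>U. e U \<noteq> 0 \<longrightarrow> U \<subseteq> N \<and> card U \<le> D1 + D2"
  proof (intro allI impI)
    fix U assume "e U \<noteq> 0"
    then obtain S where S: "S \<in> Pow U" "(\<Sum>T\<in>Pow U. if S \<union> T = U then a S * b T else 0) \<noteq> 0"
      unfolding e_def using sum.not_neutral_contains_not_neutral by blast
    then obtain T where T: "T \<in> Pow U" "(if S \<union> T = U then a S * b T else 0) \<noteq> 0"
      using sum.not_neutral_contains_not_neutral by blast
    then have U: "U = S \<union> T" "a S \<noteq> 0" "b T \<noteq> 0" by (auto split: if_splits)
    then have "S \<subseteq> N" "card S \<le> D1" "T \<subseteq> N" "card T \<le> D2" using a b by auto
    then show "U \<subseteq> N \<and> card U \<le> D1 + D2"
      using U(1) card_Un_le[of S T] by auto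
  qed
  have eq: "\<forall>A. A \<subseteq> N \<longrightarrow> F A * G A = (\<Sum>U\<in>Pow A. e U)"
  proof (intro allI impI)
    fix A assume A: "A \<subseteq> N"
    then have fA: "finite A" using assms finite_subset by blast
    have "F A * G A = (\<Sum>S\<in>Pow A. \<Sum>T\<in>Pow A. a S * b T)"
      using F[OF A] G[OF A] by (simp add: sum_product)
    also have "\<dots> = (\<Sum>S\<in>Pow A. \<Sum>T\<in>Pow A. \<Sum>U\<in>Pow A. if S \<union> T = U then a S * b T else 0)"
      using fA by (intro sum.cong refl) (auto simp: sum.delta)
    also have "\<dots> = (\<Sum>S\<in>Pow A. \<Sum>U\<in>Pow A. \<Sum>T\<in>Pow A. if S \<union> T = U then a S * b T else 0)"
      by (intro sum.cong refl sum.swap)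
    also have "\<dots> = (\<Sum>U\<in>Pow A. \<Sum>S\<in>Pow A. \<Sum>T\<in>Pow A. if S \<union> T = U then a S * b T else 0)"
      by (rule sum.swap)
    also have "\<dots> = (\<Sum>U\<in>Pow A. e U)"
    proof (intro sum.cong refl)
      fix U assume U: "U \<in> Pow A"
      have fU: "finite U" using U fA finite_subset by blast
      have "(\<Sum>S\<in>Pow A. \<Sum>T\<in>Pow A. if S \<union> T = U then a S * b T else 0)
          = (\<Sum>S\<in>Pow A. \<Sum>T\<in>Pow U. if S \<union> T = U then a S * b T else 0)"
        by (intro sum.cong refl sum.mono_neutral_right) (use U fA in auto)
      also have "\<dots> = (\<Sum>S\<in>Pow U. \<Sum>T\<in>Pow U. if S \<union> T = U then a S * b T else 0)"
        by (intro sum.mono_neutral_right) (use U fA in \<open>auto intro!: sum.neutral\<close>)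
      finally show "(\<Sum>S\<in>Pow A. \<Sum>T\<in>Pow A. if S \<union> T = U then a S * b T else 0) = e U"
        unfolding e_def .
    qed
    finally show "F A * G A = (\<Sum>U\<in>Pow A. e U)" .
  qed
  show ?thesis unfolding hasdeg_def by (rule exI[of _ e]) (use s eq in simp)
qed

lemma hasdeg_prod:
  assumes "finite N" "finite W" "\<And>u. u \<in> W \<Longrightarrow> hasdeg N D (h u)"
  shows "hasdeg N (D * card W) (\<lambda>A. \<Prod>u\<in>W. h u A)"
  using assms(2,3)
proof (induction W rule: finite_induct)
  case empty
  then show ?case using hasdeg_const[OF assms(1)] by simp
next
  case (insert x W)
  have "hasdeg N (D * card W) (\<lambda>A. \<Prod>u\<in>W. h u A)"
    using insert.IH insert.prems by blast
  then have "hasdeg N (D + D * card W) (\<lambda>A. h x A * (\<Prod>u\<in>W. h u A))"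
    using hasdeg_mult[OF assms(1), of D "h x"] insert.prems by blast
  then show ?case using insert by simp
qed



lemma sz:
  fixes a :: "'a set \<Rightarrow> real"
  assumes "finite M" "\<And>T. a T \<noteq> 0 \<Longrightarrow> T \<subseteq> M \<and> card T \<le> e" "a T0 \<noteq> 0"
  shows "(2::real) ^ card M \<le> 2 ^ e * (\<Sum>A\<in>Pow M. if (\<Sum>T\<in>Pow A. a T) \<noteq> 0 then 1 else 0)"
  using assms
proof (induction M arbitrary: a e T0 rule: finite_induct)
  case empty
  then have "T0 = {}" by blast
  then show ?case using empty by simp
next
  case (insert j M)
  define H where "H A = (\<Sum>T\<in>Pow A. a T)" for A
  define a1 where "a1 T = (if j \<notin> T then a (insert j T) else 0)" for T
  define a0 where "a0 T = (if j \<notin> T then a T else 0)" for T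
  define H1 where "H1 A = (\<Sum>T\<in>Pow A. a1 T)" for A
  have H0: "(\<Sum>T\<in>Pow A. a0 T) = H A" if "A \<in> Pow M" for A
    unfolding H_def a0_def using that insert.hyps by (intro sum.cong refl) auto
  have Hins: "H (insert j A) = H A + H1 A" if "A \<in> Pow M" for A
  proof -
    have fA: "finite A" "j \<notin> A" using that insert.hyps finite_subset by auto
    have "H1 A = (\<Sum>T\<in>Pow A. a (insert j T))"
      unfolding H1_def a1_def using fA by (intro sum.cong refl) auto
    then show ?thesis unfolding H_def using sum_pow_insert[OF fA] by simp
  qed
  define ind where "ind x = (if x \<noteq> 0 then 1 else (0::real))" for x :: real
  have tot: "(\<Sum>A\<in>Pow (insert j M). ind (H A)) = (\<Sum>A\<in>Pow M. ind (H A)) + (\<Sum>A\<in>Pow M. ind (H A + H1 A))"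
    using sum_pow_insert[OF insert.hyps, of "\<lambda>A. ind (H A)"] Hins by simp
  have goal_eq: "(\<Sum>A\<in>Pow (insert j M). if (\<Sum>T\<in>Pow A. a T) \<noteq> 0 then 1 else 0) = (\<Sum>A\<in>Pow (insert j M). ind (H A))"
    unfolding ind_def H_def by simp
  have cM: "card (insert j M) = card M + 1" using insert.hyps by simp
  show ?case
  proof (cases "\<exists>T1. a1 T1 \<noteq> 0")
    case False
    then have a1z: "H1 A = 0" for A unfolding H1_def by simp
    have nz: "a0 T0 \<noteq> 0"
    proof (cases "j \<in> T0")
      case True
      then have "a1 (T0 - {j}) = a T0" unfolding a1_def by (simp add: insert_absorb)
      then show ?thesis using False insert.prems(2) by auto
    qed (use insert.prems(2) a0_def in auto)
    have sup0: "\<And>T. a0 T \<noteq> 0 \<Longrightarrow> T \<subseteq> M \<and> card T \<le> e"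
    proof -
      fix T assume "a0 T \<noteq> 0"
      then have "j \<notin> T" "a T \<noteq> 0" unfolding a0_def by (auto split: if_splits)
      then show "T \<subseteq> M \<and> card T \<le> e" using insert.prems(1)[of T] by blast
    qed
    have IH: "(2::real) ^ card M \<le> 2 ^ e * (\<Sum>A\<in>Pow M. if (\<Sum>T\<in>Pow A. a0 T) \<noteq> 0 then 1 else 0)"
      by (rule insert.IH[of a0 e T0, OF sup0 nz])
    have "(\<Sum>A\<in>Pow M. if (\<Sum>T\<in>Pow A. a0 T) \<noteq> 0 then 1 else 0) = (\<Sum>A\<in>Pow M. ind (H A))"
      unfolding ind_def by (intro sum.cong refl) (simp add: H0)
    then show ?thesis using IH unfolding goal_eq tot cM by (simp add: a1z)
  next
    case True
    then obtain T1 where T1: "a1 T1 \<noteq> 0" by blast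
    have sup1: "T \<subseteq> M \<and> card T \<le> e - 1" if "a1 T \<noteq> 0" for T
    proof -
      have jT: "j \<notin> T" "a (insert j T) \<noteq> 0" using that unfolding a1_def by (auto split: if_splits)
      have "insert j T \<subseteq> insert j M \<and> card (insert j T) \<le> e" by (rule insert.prems(1)[of "insert j T", OF jT(2)])
      then have "insert j T \<subseteq> insert j M" "card (insert j T) \<le> e" by auto
      moreover have "finite T" using \<open>insert j T \<subseteq> insert j M\<close> insert.hyps(1) finite_subset[of T "insert j M"] by simp
      ultimately show ?thesis using jT by auto
    qed
    have e1: "e \<ge> 1"
    proof -
      have jT1: "a (insert j T1) \<noteq> 0" "j \<notin> T1" using T1 unfolding a1_def by (auto split: if_splits)
      have p: "insert j T1 \<subseteq> insert j M \<and> card (insert j T1) \<le> e"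
        by (rule insert.prems(1)[of "insert j T1", OF jT1(1)])
      then have "card (insert j T1) \<le> e" "finite T1" using jT1
        using insert.hyps(1) finite_subset[of T1 "insert j M"] by auto
      then show ?thesis using \<open>j \<notin> T1\<close> by simp
    qed
    have IH: "(2::real) ^ card M \<le> 2 ^ (e - 1) * (\<Sum>A\<in>Pow M. if (\<Sum>T\<in>Pow A. a1 T) \<noteq> 0 then 1 else 0)"
      by (rule insert.IH[of a1 "e - 1" T1, OF sup1 T1])
    have "(\<Sum>A\<in>Pow M. if (\<Sum>T\<in>Pow A. a1 T) \<noteq> 0 then 1 else 0) \<le> (\<Sum>A\<in>Pow M. ind (H A) + ind (H A + H1 A))"
      unfolding H1_def[symmetric] by (intro sum_mono) (auto simp: ind_def)
    also have "\<dots> = (\<Sum>A\<in>Pow (insert j M). ind (H A))" unfolding tot by (simp add: sum.distrib)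
    finally have S1: "(\<Sum>A\<in>Pow M. if (\<Sum>T\<in>Pow A. a1 T) \<noteq> 0 then 1 else 0) \<le> (\<Sum>A\<in>Pow (insert j M). ind (H A))" .
    have pe: "(2::real) ^ e = 2 * 2 ^ (e - 1)" using e1 by (cases e) auto
    have "(2::real) ^ card (insert j M) = 2 * 2 ^ card M" using cM by simp
    also have "\<dots> \<le> 2 * (2 ^ (e - 1) * (\<Sum>A\<in>Pow M. if (\<Sum>T\<in>Pow A. a1 T) \<noteq> 0 then 1 else 0))"
      using IH by simp
    also have "\<dots> \<le> 2 * (2 ^ (e - 1) * (\<Sum>A\<in>Pow (insert j M). ind (H A)))"
      using S1 by (intro mult_left_mono) auto
    finally show ?thesis unfolding goal_eq pe by (simp add: mult_ac)
  qed
qed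

lemma count_small_subsets:
  assumes "finite R"
  shows "card {S. S \<subseteq> R \<and> card S \<le> d} \<le> (card R + 1) ^ d"
proof -
  have "{S. S \<subseteq> R \<and> card S \<le> d} = (\<Union>j\<in>{..d}. {S. S \<subseteq> R \<and> card S = j})" by auto
  then have "card {S. S \<subseteq> R \<and> card S \<le> d} \<le> (\<Sum>j\<le>d. card {S. S \<subseteq> R \<and> card S = j})"
    using card_UN_le[of "{..d}" "\<lambda>j. {S. S \<subseteq> R \<and> card S = j}"] by simp
  also have "\<dots> = (\<Sum>j\<le>d. card R choose j)" using n_subsets[OF assms] by simp
  also have "\<dots> \<le> (\<Sum>j\<le>d. card R ^ j)"
  proof (intro sum_mono)
    fix j show "card R choose j \<le> card R ^ j"
      by (cases "j \<le> card R") (auto simp: binomial_le_pow binomial_eq_0)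
  qed
  also have "\<dots> \<le> (\<Sum>j\<le>d. (d choose j) * card R ^ j)"
  proof (intro sum_mono)
    fix j assume "j \<in> {..d}"
    then have "0 < d choose j" by (simp add: zero_less_binomial)
    then have "d choose j \<ge> 1" by (simp add: Suc_le_eq)
    then show "card R ^ j \<le> (d choose j) * card R ^ j" by simp
  qed
  also have "\<dots> = (card R + 1) ^ d" using binomial_ring[of "card R" 1 d] by simp
  finally show ?thesis .
qed



lemma eval_ind:
  assumes "\<And>S. c S \<noteq> 0 \<Longrightarrow> S \<subseteq> {..<n}" "A \<subseteq> {..<n}"
  shows "ml_eval n c (\<lambda>i. if i \<in> A then 1 else 0) = (\<Sum>T\<in>Pow A. c T)"
proof -
  have "ml_eval n c (\<lambda>i. if i \<in> A then 1 else 0) = (\<Sum>S\<in>Pow {..<n}. if S \<subseteq> A then c S else 0)"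
    unfolding ml_eval_def
  proof (intro sum.cong refl)
    fix S assume S: "S \<in> Pow {..<n}"
    then have fS: "finite S" using finite_subset by blast
    show "c S * (\<Prod>i\<in>S. if i \<in> A then 1 else 0) = (if S \<subseteq> A then c S else 0)"
    proof (cases "S \<subseteq> A")
      case True
      then have "(\<Prod>i\<in>S. if i \<in> A then 1 else (0::real)) = 1" by (intro prod.neutral) auto
      then show ?thesis using True by simp
    next
      case False
      then obtain i where "i \<in> S" "i \<notin> A" by auto
      then have "(\<Prod>i\<in>S. if i \<in> A then 1 else (0::real)) = 0" using fS by (intro prod_zero) auto
      then show ?thesis using False by simp
    qed
  qed
  also have "\<dots> = (\<Sum>S\<in>{S\<in>Pow {..<n}. S \<subseteq> A}. c S)"
    by (simp add: sum.inter_filter[symmetric])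
  also have "{S\<in>Pow {..<n}. S \<subseteq> A} = Pow A" using assms(2) by auto
  finally show ?thesis .
qed

lemma cube_image:
  assumes "\<And>S. c S \<noteq> 0 \<Longrightarrow> S \<subseteq> {..<n}"
  shows "ml_eval n c ` bool_cube n = (\<lambda>A. \<Sum>T\<in>Pow A. c T) ` Pow {..<n}"
proof
  show "ml_eval n c ` bool_cube n \<subseteq> (\<lambda>A. \<Sum>T\<in>Pow A. c T) ` Pow {..<n}"
  proof
    fix y assume "y \<in> ml_eval n c ` bool_cube n"
    then obtain x where x: "x \<in> bool_cube n" "y = ml_eval n c x" by auto
    define A where "A = {i. i < n \<and> x i = 1}"
    have "x = (\<lambda>i. if i \<in> A then 1 else 0)"
    proof
      fix i show "x i = (if i \<in> A then 1 else 0)"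
        using x(1) unfolding bool_cube_def A_def by (cases "i < n") auto
    qed
    moreover have "A \<subseteq> {..<n}" unfolding A_def by auto
    ultimately show "y \<in> (\<lambda>A. \<Sum>T\<in>Pow A. c T) ` Pow {..<n}"
      using x(2) eval_ind[OF assms] by auto
  qed
next
  show "(\<lambda>A. \<Sum>T\<in>Pow A. c T) ` Pow {..<n} \<subseteq> ml_eval n c ` bool_cube n"
  proof
    fix y assume "y \<in> (\<lambda>A. \<Sum>T\<in>Pow A. c T) ` Pow {..<n}"
    then obtain A where A: "A \<subseteq> {..<n}" "y = (\<Sum>T\<in>Pow A. c T)" by auto
    have "(\<lambda>i. if i \<in> A then 1 else 0) \<in> bool_cube n" using A unfolding bool_cube_def by auto
    then show "y \<in> ml_eval n c ` bool_cube n" using eval_ind[OF assms A(1)] A(2) by force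
  qed
qed


lemma boolsq:
  assumes "x \<in> {0,1}" "y \<in> {0,1}"
  shows "(x - y)^2 = (if x \<noteq> y then 1 else (0::real))"
  using assms by auto

lemma main_bound:
  fixes n d :: nat and c :: "nat set \<Rightarrow> real"
  assumes cs: "\<And>S. c S \<noteq> 0 \<Longrightarrow> S \<subseteq> {..<n} \<and> card S \<le> d" and d1: "d \<ge> 1"
  defines "Q \<equiv> (\<lambda>A. \<Sum>T\<in>Pow A. c T)"
  shows "real (card {i. i \<in> {..<n} \<and> (\<exists>S. c S \<noteq> 0 \<and> i \<in> S)})
           \<le> 2 ^ d * 4 * real (card (Q ` Pow {..<n})) * real (d * (card (Q ` Pow {..<n}) - 1))"
proof -
  define N where "N = {..<n::nat}"
  have fN: "finite N" unfolding N_def by simp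
  define V where "V = Q ` Pow N"
  define k where "k = card V"
  have fV: "finite V" unfolding V_def using fN by simp
  define Rel where "Rel = {i. i \<in> N \<and> (\<exists>S. c S \<noteq> 0 \<and> i \<in> S)}"
  define D where "D = d * (k - 1)"
  define f where "f v A = (\<Prod>u\<in>V - {v}. (Q A - u) / (v - u))" for v A
  define cnt where "cnt i = (\<Sum>A\<in>Pow N. if Q A \<noteq> Q (flip i A) then 1 else (0::real))" for i
  have hQ: "hasdeg N d Q"
    unfolding hasdeg_def Q_def using cs unfolding N_def by blast
  have hf: "hasdeg N D (f v)" if v: "v \<in> V" for v
  proof -
    have "hasdeg N (d * card (V - {v})) (\<lambda>A. \<Prod>u\<in>V - {v}. (Q A - u) / (v - u))"
    proof (rule hasdeg_prod[OF fN])
      show "finite (V - {v})" using fV by simp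
    next
      fix u assume "u \<in> V - {v}"
      have "hasdeg N d (\<lambda>A. (1 / (v - u)) * Q A + (- u / (v - u)))"
        by (rule hasdeg_lin[OF fN hQ])
      moreover have "(\<lambda>A. (1 / (v - u)) * Q A + (- u / (v - u))) = (\<lambda>A. (Q A - u) / (v - u))"
        by (rule ext) (simp add: diff_divide_distrib)
      ultimately show "hasdeg N d (\<lambda>A. (Q A - u) / (v - u))" by simp
    qed
    moreover have "card (V - {v}) = k - 1" using v fV unfolding k_def by simp
    ultimately show ?thesis unfolding D_def f_def[abs_def] by simp
  qed
  have fval: "f v A = (if Q A = v then 1 else 0)" if "v \<in> V" "A \<subseteq> N" for v A
  proof (cases "Q A = v")
    case True
    then have "f v A = (\<Prod>u\<in>V - {v}. 1)" unfolding f_def by (intro prod.cong refl) auto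
    then show ?thesis using True by simp
  next
    case False
    have "Q A \<in> V - {v}" using that False unfolding V_def by auto
    then have "f v A = 0" unfolding f_def using fV by (intro prod_zero) auto
    then show ?thesis using False by simp
  qed
  have inf_v: "(\<Sum>i\<in>N. \<Sum>A\<in>Pow N. (f v A - f v (flip i A))^2) \<le> 4 * real D * 2 ^ card N" if v: "v \<in> V" for v
  proof -
    have "(\<Sum>i\<in>N. \<Sum>A\<in>Pow N. (f v A - f v (flip i A))^2) \<le> 4 * D * (\<Sum>A\<in>Pow N. (f v A)^2)"
      by (rule influence[OF fN hf[OF v]])
    also have "(\<Sum>A\<in>Pow N. (f v A)^2) \<le> (\<Sum>A\<in>Pow N. 1)"
      by (intro sum_mono) (simp add: fval[OF v])
    also have "(\<Sum>A\<in>Pow N. (1::real)) = 2 ^ card N" using fN by (simp add: card_Pow)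
    finally show ?thesis by (simp add: mult_left_mono)
  qed
  have cnt_le: "cnt i \<le> (\<Sum>v\<in>V. \<Sum>A\<in>Pow N. (f v A - f v (flip i A))^2)" if i: "i \<in> N" for i
  proof -
    have "cnt i \<le> (\<Sum>A\<in>Pow N. \<Sum>v\<in>V. (f v A - f v (flip i A))^2)"
      unfolding cnt_def
    proof (intro sum_mono)
      fix A assume A: "A \<in> Pow N"
      have fA: "flip i A \<subseteq> N" using flip_sub[OF i] A by auto
      show "(if Q A \<noteq> Q (flip i A) then 1 else 0) \<le> (\<Sum>v\<in>V. (f v A - f v (flip i A))^2)"
      proof (cases "Q A \<noteq> Q (flip i A)")
        case True
        have QV: "Q A \<in> V" using A unfolding V_def by auto
        have "(f (Q A) A - f (Q A) (flip i A))^2 = 1"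
          using fval[OF QV] A fA True by simp
        moreover have "(f (Q A) A - f (Q A) (flip i A))^2 \<le> (\<Sum>v\<in>V. (f v A - f v (flip i A))^2)"
          by (rule member_le_sum[OF QV]) (auto simp: fV)
        ultimately show ?thesis using True by simp
      qed (simp add: sum_nonneg)
    qed
    also have "\<dots> = (\<Sum>v\<in>V. \<Sum>A\<in>Pow N. (f v A - f v (flip i A))^2)" by (rule sum.swap)
    finally show ?thesis .
  qed
  have sz_i: "2 ^ card N \<le> 2 ^ d * cnt i" if i: "i \<in> Rel" for i
  proof -
    obtain S0 where S0: "c S0 \<noteq> 0" "i \<in> S0" and iN: "i \<in> N" using i unfolding Rel_def by blast
    define M where "M = N - {i}"
    have fM: "finite M" "i \<notin> M" and NM: "N = insert i M" using fN iN unfolding M_def by auto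
    define b where "b T = (if i \<notin> T then c (insert i T) else 0)" for T
    have bs: "T \<subseteq> M \<and> card T \<le> d - 1" if "b T \<noteq> 0" for T
    proof -
      have iT: "i \<notin> T" "c (insert i T) \<noteq> 0" using that unfolding b_def by (auto split: if_splits)
      have "insert i T \<subseteq> N \<and> card (insert i T) \<le> d" using cs[OF iT(2)] unfolding N_def by blast
      moreover have "finite T" using calculation fN finite_subset[of T N] by auto
      ultimately show ?thesis using iT unfolding M_def by auto
    qed
    have b0: "b (S0 - {i}) \<noteq> 0" unfolding b_def using S0 by (simp add: insert_absorb)
    have szb: "(2::real) ^ card M \<le> 2 ^ (d - 1) * (\<Sum>A\<in>Pow M. if (\<Sum>T\<in>Pow A. b T) \<noteq> 0 then 1 else 0)"
      by (rule sz[of M b "d - 1", OF fM(1) bs b0])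
    have eqb: "(\<Sum>T\<in>Pow A. b T) = Q (insert i A) - Q A" if A: "A \<in> Pow M" for A
    proof -
      have fA: "finite A" "i \<notin> A" using A fM finite_subset by auto
      have "(\<Sum>T\<in>Pow A. b T) = (\<Sum>T\<in>Pow A. c (insert i T))"
        unfolding b_def using fA by (intro sum.cong refl) auto
      then show ?thesis unfolding Q_def using sum_pow_insert[OF fA, of c] by simp
    qed
    have "(\<Sum>A\<in>Pow M. if (\<Sum>T\<in>Pow A. b T) \<noteq> 0 then 1 else 0) = (\<Sum>A\<in>Pow M. if Q A \<noteq> Q (flip i A) then 1 else (0::real))"
    proof (intro sum.cong refl)
      fix A assume A: "A \<in> Pow M"
      then have "flip i A = insert i A" using fM unfolding flip_def by auto
      then show "(if (\<Sum>T\<in>Pow A. b T) \<noteq> 0 then 1 else 0) = (if Q A \<noteq> Q (flip i A) then 1 else (0::real))"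
        using eqb[OF A] by auto
    qed
    also have "\<dots> \<le> cnt i"
    proof -
      have "cnt i = (\<Sum>A\<in>Pow M. if Q A \<noteq> Q (flip i A) then 1 else (0::real)) + (\<Sum>A\<in>Pow M. if Q (insert i A) \<noteq> Q (flip i (insert i A)) then 1 else (0::real))"
        unfolding cnt_def NM by (rule sum_pow_insert[OF fM])
      moreover have "0 \<le> (\<Sum>A\<in>Pow M. if Q (insert i A) \<noteq> Q (flip i (insert i A)) then 1 else (0::real))"
        by (intro sum_nonneg) auto
      ultimately show ?thesis by linarith
    qed
    finally have "(2::real) ^ card M \<le> 2 ^ (d - 1) * cnt i" using szb by (meson order_trans mult_left_mono zero_le_power zero_le_numeral)
    moreover have "card N = Suc (card M)" using NM fM by simp
    moreover have "(2::real) ^ d = 2 * 2 ^ (d - 1)" using d1 by (cases d) auto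
    ultimately show ?thesis by simp
  qed
  have cnt_nn: "0 \<le> cnt i" for i unfolding cnt_def by (intro sum_nonneg) auto
  have "real (card Rel) * 2 ^ card N = (\<Sum>i\<in>Rel. 2 ^ card N)" by simp
  also have "\<dots> \<le> (\<Sum>i\<in>Rel. 2 ^ d * cnt i)" by (intro sum_mono sz_i)
  also have "\<dots> \<le> (\<Sum>i\<in>N. 2 ^ d * cnt i)"
    by (intro sum_mono2 fN) (auto simp: Rel_def cnt_nn)
  also have "\<dots> \<le> (\<Sum>i\<in>N. 2 ^ d * (\<Sum>v\<in>V. \<Sum>A\<in>Pow N. (f v A - f v (flip i A))^2))"
    by (intro sum_mono mult_left_mono cnt_le) auto
  also have "\<dots> = 2 ^ d * (\<Sum>v\<in>V. \<Sum>i\<in>N. \<Sum>A\<in>Pow N. (f v A - f v (flip i A))^2)"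
    by (simp add: sum_distrib_left[symmetric] sum.swap[of _ N V])
  also have "\<dots> \<le> 2 ^ d * (\<Sum>v\<in>V. 4 * real D * 2 ^ card N)"
    by (intro mult_left_mono sum_mono inf_v) auto
  also have "\<dots> = (2 ^ d * 4 * real k * real D) * 2 ^ card N" unfolding k_def by simp
  finally have "real (card Rel) \<le> 2 ^ d * 4 * real k * real D" by simp
  then show ?thesis unfolding Rel_def N_def k_def V_def D_def by simp
qed


lemma numeric:
  fixes m k d :: nat
  assumes "m \<le> 2 ^ d * 4 * k * (d * (k - 1))"
  shows "m + 1 \<le> 2 ^ (d + d + k + k + 2)"
proof -
  have k0: "k < 2 ^ k" by (rule less_exp)
  have k: "k \<le> 2 ^ k" "k - 1 < 2 ^ k" using k0 by (simp, meson diff_le_self le_less_trans)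
  have dd: "d \<le> 2 ^ d" using less_exp[of d] by auto
  have "k * (d * (k - 1)) \<le> 2 ^ k * (2 ^ d * (k - 1))"
    using k dd by (intro mult_mono) auto
  also have "\<dots> < 2 ^ k * (2 ^ d * 2 ^ k)"
    using k by simp
  finally have X: "k * (d * (k - 1)) < 2 ^ k * (2 ^ d * 2 ^ k)" .
  have "m \<le> 2 ^ d * 4 * (k * (d * (k - 1)))" using assms by (simp add: mult_ac)
  also have "\<dots> < 2 ^ d * 4 * (2 ^ k * (2 ^ d * 2 ^ k))" using X by simp
  also have "\<dots> = 2 ^ (d + d + k + k + 2)" by (simp add: power_add mult_2 mult_ac)
  finally show ?thesis by simp
qed

theorem lemma6p3:
  fixes n d :: nat and c :: "nat set \<Rightarrow> real"
  assumes "is_multilinear n c"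
    and "degree_le c d"
  shows "real (card (ml_eval n c ` bool_cube n))
           \<ge> log 2 (real (sparsity c)) / (2 * real d ^ 2) - 2"
proof -
  have cs: "S \<subseteq> {..<n} \<and> card S \<le> d" if "c S \<noteq> 0" for S
    using assms that unfolding is_multilinear_def degree_le_def by blast
  define Q where "Q = (\<lambda>A. \<Sum>T\<in>Pow A. c T)"
  define k where "k = card (Q ` Pow {..<n})"
  have img: "card (ml_eval n c ` bool_cube n) = k"
    unfolding k_def Q_def using cube_image[of c n] cs by auto
  show ?thesis
  proof (cases "d = 0 \<or> sparsity c = 0")
    case True
    then show ?thesis by (auto simp: log_def)
  next
    case False
    then have d1: "d \<ge> 1" and T1: "sparsity c \<ge> 1" by auto
    define Rel where "Rel = {i. i \<in> {..<n} \<and> (\<exists>S. c S \<noteq> 0 \<and> i \<in> S)}"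
    define m where "m = card Rel"
    have fR: "finite Rel" unfolding Rel_def by auto
    have "real m \<le> 2 ^ d * 4 * real k * real (d * (k - 1))"
      unfolding m_def Rel_def k_def using main_bound[OF cs d1] unfolding Q_def by simp
    also have "\<dots> = real (2 ^ d * 4 * k * (d * (k - 1)))" by simp
    finally have "m \<le> 2 ^ d * 4 * k * (d * (k - 1))" by (simp only: of_nat_le_iff)
    then have mb: "m + 1 \<le> 2 ^ (d + d + k + k + 2)" by (rule numeric)
    have "{S. c S \<noteq> 0} \<subseteq> {S. S \<subseteq> Rel \<and> card S \<le> d}"
      unfolding Rel_def using cs by blast
    then have "sparsity c \<le> card {S. S \<subseteq> Rel \<and> card S \<le> d}"
      unfolding sparsity_def using fR by (intro card_mono) auto
    also have "\<dots> \<le> (m + 1) ^ d" unfolding m_def by (rule count_small_subsets[OF fR])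
    also have "\<dots> \<le> (2 ^ (d + d + k + k + 2)) ^ d" by (rule power_mono[OF mb]) simp
    also have "\<dots> = 2 ^ ((d + d + k + k + 2) * d)" by (simp only: power_mult)
    finally have "log 2 (real (sparsity c)) \<le> real ((d + d + k + k + 2) * d)"
      using T1 by (intro log2_of_power_le) auto
    also have "\<dots> \<le> real (k + 2) * (2 * real d ^ 2)"
    proof -
      have "(d + d + k + k + 2) * d \<le> (k + 2) * (2 * d ^ 2)"
      proof -
        have "2 * k * d + 2 * d \<le> 2 * k * d * d + 2 * d * d" using d1
          by (intro add_mono) auto
        then show ?thesis by (simp add: power2_eq_square algebra_simps)
      qed
      then have "real ((d + d + k + k + 2) * d) \<le> real ((k + 2) * (2 * d ^ 2))" by (simp only: of_nat_le_iff)
      then show ?thesis by (simp add: algebra_simps)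
    qed
    finally have "log 2 (real (sparsity c)) / (2 * real d ^ 2) \<le> real (k + 2)"
      using d1 by (simp add: divide_le_eq)
    then show ?thesis using img by simp
  qed
qed

end
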